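(* Let $d\ge 1$ and let $n$ be an odd positive integer. Let $v_1,\ldots,v_n\in\mathbb{R}^d$ be non-zero vectors with $\|v_i\|_2\le 1$ for all $i$, let $\varepsilon_1,\ldots,\varepsilon_n$ be independent Rademacher random variables, and set $S_n=v_1\varepsilon_1+\cdots+v_n\varepsilon_n$ and $R_{n-1}=\varepsilon_1+\cdots+\varepsilon_{n-1}$. Then $$\mathbb{P}(S_n=0)\le \mathbb{P}\left(\tfrac12 R_{n-1}+\varepsilon_n=0\right).$$
   Context: A Rademacher random variable $\varepsilon$ satisfies $\mathbb{P}(\varepsilon=1)=\mathbb{P}(\varepsilon=-1)=\tfrac12$. *)

theory Defs
  imports "HOL-Analysis.Analysis" "HOL-Probability.Probability"
begin

definition rademacher :: "real pmf" where
  "rademacher = pmf_of_set {-1, 1}"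

text \<open>Joint law of n independent Rademacher variables eps_0, ..., eps_(n-1)
  (indices shifted by one relative to the paper).\<close>
definition rademacher_vec :: "nat \<Rightarrow> (nat \<Rightarrow> real) pmf" where
  "rademacher_vec n = Pi_pmf {..<n} 0 (\<lambda>_. rademacher)"

end

theory Submission
  imports Defs "HOL-Combinatorics.Multiset_Permutations"
begin


lemma invol_even_card:
  fixes D :: "'a set"
  assumes "finite D" "\<And>x. x \<in> D \<Longrightarrow> g x \<in> D" "\<And>x. x \<in> D \<Longrightarrow> g (g x) = x"
    "\<And>x. x \<in> D \<Longrightarrow> g x \<noteq> x"
  shows "even (card D)"
  using assms
proof (induction "card D" arbitrary: D rule: less_induct)
  case less
  show ?case
  proof (cases "D = {}")
    case True then show ?thesis by simp
  next
    case False
    then obtain x where x: "x \<in> D" by blast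
    define D' where "D' = D - {x, g x}"
    have gx: "g x \<in> D" "g x \<noteq> x" using less.prems x by auto
    have cD: "card D = card D' + 2"
    proof -
      have "card D' = card D - card {x, g x}" unfolding D'_def
        using less.prems(1) x gx by (subst card_Diff_subset) auto
      moreover have "card {x, g x} = 2" using gx by simp
      moreover have "card D \<ge> 2" using x gx less.prems(1)
        by (metis \<open>card {x, g x} = 2\<close> card_mono empty_subsetI insert_subset)
      ultimately show ?thesis by simp
    qed
    have "even (card D')"
    proof (rule less.hyps)
      show "card D' < card D" using cD by simp
      show "finite D'" using less.prems(1) D'_def by simp
      fix y assume y: "y \<in> D'"
      then have yD: "y \<in> D" "y \<noteq> x" "y \<noteq> g x" by (auto simp: D'_def)
      show "g y \<in> D'" unfolding D'_def
        using less.prems(2,3) yD x by (metis DiffI empty_iff insertE)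
      show "g (g y) = y" using less.prems(3) yD by simp
      show "g y \<noteq> y" using less.prems(4) yD by simp
    qed
    then show ?thesis using cD by simp
  qed
qed



lemma fiber_card:
  assumes "finite U" "T \<subseteq> U" "card T = k"
  shows "card {xs \<in> permutations_of_set U. set (take k xs) = T} = fact k * fact (card U - k)"
proof -
  let ?f = "\<lambda>(ys, zs). ys @ zs"
  have fT: "finite T" using assms finite_subset by blast
  have eq: "{xs \<in> permutations_of_set U. set (take k xs) = T} =
        ?f ` (permutations_of_set T \<times> permutations_of_set (U - T))"
  proof (intro equalityI subsetI)
    fix xs assume "xs \<in> {xs \<in> permutations_of_set U. set (take k xs) = T}"
    then have xs: "set xs = U" "distinct xs" "set (take k xs) = T"
      by (auto simp: permutations_of_set_def)
    have "set (drop k xs) = U - T"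
    proof -
      have "set xs = set (take k xs) \<union> set (drop k xs)"
        by (metis append_take_drop_id set_append)
      moreover have "set (take k xs) \<inter> set (drop k xs) = {}"
        using xs(2) by (simp add: set_take_disj_set_drop_if_distinct)
      ultimately show ?thesis using xs by blast
    qed
    then have "(take k xs, drop k xs) \<in> permutations_of_set T \<times> permutations_of_set (U - T)"
      using xs by (auto simp: permutations_of_set_def distinct_take distinct_drop)
    then show "xs \<in> ?f ` (permutations_of_set T \<times> permutations_of_set (U - T))"
      by (metis (no_types, lifting) append_take_drop_id case_prod_conv image_eqI)
  next
    fix xs assume "xs \<in> ?f ` (permutations_of_set T \<times> permutations_of_set (U - T))"
    then obtain ys zs where p: "ys \<in> permutations_of_set T" "zs \<in> permutations_of_set (U - T)"
      and xs: "xs = ys @ zs" by auto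
    have "length ys = k" using p(1) assms(3) length_finite_permutations_of_set by blast
    then show "xs \<in> {xs \<in> permutations_of_set U. set (take k xs) = T}"
      using p xs assms(2) by (auto simp: permutations_of_set_def)
  qed
  have inj: "inj_on ?f (permutations_of_set T \<times> permutations_of_set (U - T))"
  proof (rule inj_onI, clarsimp)
    fix ys zs ys' zs'
    assume "ys \<in> permutations_of_set T" "ys' \<in> permutations_of_set T" "ys @ zs = ys' @ zs'"
    moreover then have "length ys = length ys'"
      using length_finite_permutations_of_set by metis
    ultimately show "ys = ys' \<and> zs = zs'" by simp
  qed
  have "card (U - T) = card U - k" using assms fT by (simp add: card_Diff_subset)
  then show ?thesis
    unfolding eq card_image[OF inj] card_cartesian_product
    using fT assms by simp
qed



lemma sum_lessThan_add_split:
  fixes f :: "nat \<Rightarrow> real"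
  shows "(\<Sum>j<k+m. f j) = (\<Sum>j<k. f j) + (\<Sum>j<m. f (k + j))"
  by (induction m) (auto simp: add.assoc)

lemma arc_sum:
  assumes "distinct xs" "length xs = n" "k \<le> n"
  shows "sum b (set (take k (rotate i xs))) = (\<Sum>j<k. b (xs ! ((i + j) mod n)))"
proof -
  let ?ys = "take k (rotate i xs)"
  have d: "distinct ?ys" using assms by simp
  have l: "length ?ys = k" using assms by simp
  have "sum b (set ?ys) = sum_list (map b ?ys)"
    using d by (simp add: sum_list_distinct_conv_sum_set)
  also have "\<dots> = (\<Sum>j<k. b (?ys ! j))"
    using assms by (simp add: sum_list_sum_nth atLeast0LessThan min_absorb2)
  also have "\<dots> = (\<Sum>j<k. b (xs ! ((i + j) mod n)))"
    by (rule sum.cong) (use assms in \<open>auto simp: nth_rotate\<close>)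
  finally show ?thesis .
qed

lemma circle_bound:
  fixes b :: "nat \<Rightarrow> real"
  assumes odd: "odd n" and dxs: "distinct xs" and sxs: "set xs = {..<n}"
    and pos: "\<And>i. i < n \<Longrightarrow> b i > 0"
  shows "(\<Sum>i<n. card {k\<in>{1..<n}. 2 * sum b (set (take k (rotate i xs))) = sum b {..<n}})
          \<le> n - 1"
proof -
  define tot where "tot = sum b {..<n}"
  have len: "length xs = n" using dxs sxs distinct_card by fastforce
  have n0: "n > 0" using odd by (cases n) auto
  define c where "c j = b (xs ! (j mod n))" for j
  have cpos: "c j > 0" for j
  proof -
    have "xs ! (j mod n) \<in> set xs" using len n0 by simp
    then show ?thesis using pos sxs unfolding c_def by auto
  qed
  define W where "W i k = (\<Sum>j<k. c (i + j))" for i k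
  have arcW: "sum b (set (take k (rotate i xs))) = W i k" if "k \<le> n" for i k
    unfolding W_def c_def by (rule arc_sum[OF dxs len that])
  have Wn: "W i n = tot" for i
  proof -
    have "set (take n (rotate i xs)) = {..<n}" using len sxs by simp
    then show ?thesis using arcW[of n i] unfolding tot_def by (simp only: order_refl)
  qed
  have Wsplit: "W i (k + m) = W i k + W (i + k) m" for i k m
    unfolding W_def sum_lessThan_add_split by (simp add: add.assoc)
  have Wmod: "W (i mod n) m = W i m" for i m
    unfolding W_def c_def by (simp add: mod_add_left_eq)
  have Wmono: "W i k < W i k'" if "k < k'" for i k k'
  proof -
    have "0 < W (i + k) (k' - k)" unfolding W_def
      by (rule sum_pos) (use that cpos in \<open>auto simp: lessThan_empty_iff\<close>)
    moreover have "W i k' = W i k + W (i + k) (k' - k)"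
      using Wsplit[of i k "k' - k"] that by simp
    ultimately show ?thesis by linarith
  qed
  define S where "S i = {k\<in>{1..<n}. 2 * W i k = tot}" for i
  have S_eq: "{k\<in>{1..<n}. 2 * sum b (set (take k (rotate i xs))) = sum b {..<n}} = S i" for i
    unfolding S_def tot_def using arcW by auto
  have S_uniq: "k = k'" if "k \<in> S i" "k' \<in> S i" for i k k'
  proof -
    have "2 * W i k = tot" "2 * W i k' = tot" using that by (auto simp: S_def)
    then show ?thesis using Wmono[of k k' i] Wmono[of k' k i]
      by (cases k k' rule: linorder_cases) auto
  qed
  have cardS: "card (S i) \<le> of_bool (S i \<noteq> {})" for i
  proof (cases "S i = {}")
    case False
    have "card (S i) \<le> Suc 0" using S_uniq by (subst card_le_Suc0_iff_eq) (auto simp: S_def)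
    then show ?thesis using False by simp
  qed simp
  define D where "D = {i\<in>{..<n}. S i \<noteq> {}}"
  have "(\<Sum>i<n. card (S i)) \<le> (\<Sum>i<n. of_bool (S i \<noteq> {}))"
    by (intro sum_mono cardS)
  also have "\<dots> = card D" unfolding D_def by (simp add: sum.If_cases Int_def)
  also have "card D \<le> n - 1"
  proof (rule ccontr)
    assume "\<not> card D \<le> n - 1"
    moreover have "D \<subseteq> {..<n}" unfolding D_def by auto
    ultimately have DU: "D = {..<n}"
      using card_seteq[of "{..<n}" D] by auto
    define K where "K i = (SOME k. k \<in> S i)" for i
    have KS: "K i \<in> S i" if "i < n" for i
      proof -
      have "S i \<noteq> {}" using DU that unfolding D_def by auto
      then show ?thesis unfolding K_def by (simp add: some_in_eq)
    qed
    define g where "g i = (i + K i) mod n" for i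
    have Kr: "0 < K i" "K i < n" "2 * W i (K i) = tot" if "i < n" for i
      using KS[OF that] unfolding S_def by auto
    have KgS: "n - K i \<in> S (g i)" if "i < n" for i
    proof -
      have "W i n = W i (K i) + W (i + K i) (n - K i)"
        using Wsplit[of i "K i" "n - K i"] Kr[OF that] by simp
      then have "2 * W (g i) (n - K i) = tot" unfolding g_def Wmod
        using Wn[of i] Kr[OF that] by simp
      then show ?thesis unfolding S_def using Kr[OF that] by auto
    qed
    have gi: "g i < n" for i unfolding g_def using n0 by simp
    have Kg: "K (g i) = n - K i" if "i < n" for i
      using S_uniq[OF KS[OF gi] KgS[OF that]] .
    have ggi: "g (g i) = i" if "i < n" for i
    proof -
      have "g (g i) = ((i + K i) mod n + (n - K i)) mod n" unfolding g_def[of "g i"] Kg[OF that]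
        by (simp add: g_def)
      also have "\<dots> = (i + K i + (n - K i)) mod n" by (simp add: mod_add_left_eq)
      also have "\<dots> = (i + n) mod n" using Kr[OF that] by simp
      also have "\<dots> = i" using that by simp
      finally show ?thesis .
    qed
    have gne: "g i \<noteq> i" if "i < n" for i
    proof
      assume "g i = i"
      then have "(i + K i) mod n = i" unfolding g_def .
      moreover have "(i + K i) mod n = (if i + K i < n then i + K i else i + K i - n)"
        using Kr[OF that] that by (simp add: mod_if le_mod_geq)
      ultimately show False using Kr[OF that] that by (auto split: if_splits)
    qed
    have "even (card {..<n})"
      by (rule invol_even_card[of _ g]) (use gi ggi gne in auto)
    then show False using odd by simp
  qed
  finally show ?thesis unfolding S_eq .
qed



lemma rotate_inj: "inj (rotate i :: 'a list \<Rightarrow> 'a list)"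
proof (induction i)
  case 0 then show ?case by simp
next
  case (Suc i)
  have "rotate (Suc i) = rotate1 \<circ> rotate i" by (rule ext) simp
  then show ?case using inj_compose[OF inj_rotate1 Suc.IH] by (simp add: comp_def)
qed

lemma rotate_bij_perm: "bij_betw (rotate i) (permutations_of_set U) (permutations_of_set U)"
proof -
  have sub: "rotate i ` permutations_of_set U \<subseteq> permutations_of_set U"
    by (auto simp: permutations_of_set_def)
  have inj: "inj_on (rotate i) (permutations_of_set U)"
    using rotate_inj by (metis inj_on_subset subset_UNIV)
  show ?thesis unfolding bij_betw_def
    using endo_inj_surj[OF finite_permutations_of_set sub inj] inj by simp
qed

lemma fact_min_bound:
  assumes "n = 2 * m + 1" "k \<le> n"
  shows "fact m * fact (m + 1) \<le> (fact k * fact (n - k) :: nat)"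
proof -
  have e1: "fact k * fact (n - k) * (n choose k) = (fact n :: nat)"
    using assms(2) by (rule binomial_fact_lemma)
  have e2: "fact m * fact (m + 1) * (n choose m) = (fact n :: nat)"
    using binomial_fact_lemma[of m n] assms(1) by simp
  have "n choose k \<le> n choose m"
    using binomial_maximum[of n k] assms(1) by simp
  moreover have "n choose k > 0" using assms(2) by simp
  ultimately have "fact m * fact (m + 1) * (n choose k) \<le> fact k * fact (n - k) * (n choose k)"
    using e1 e2 by (metis mult_le_mono2)
  then show ?thesis using \<open>n choose k > 0\<close> by simp
qed

lemma count_A:
  fixes b :: "nat \<Rightarrow> real"
  assumes nm: "n = 2 * m + 1" and pos: "\<And>i. i < n \<Longrightarrow> b i > 0"
  shows "card {T. T \<subseteq> {..<n} \<and> 2 * sum b T = sum b {..<n}} * (fact m * fact (m + 1))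
           \<le> fact (2 * m) * (2 * m)"
proof -
  define A where "A = {T. T \<subseteq> {..<n} \<and> 2 * sum b T = sum b {..<n}}"
  define P where "P = permutations_of_set {..<n::nat}"
  define K where "K = {1..<n}"
  have odd: "odd n" using nm by simp
  have finA: "finite A" unfolding A_def by (rule finite_subset[of _ "Pow {..<n}"]) auto
  have finP: "finite P" unfolding P_def by simp
  have tot_pos: "sum b {..<n} > 0" using nm pos by (intro sum_pos) (auto simp: lessThan_empty_iff)
  have cardA_K: "card T \<in> K" if "T \<in> A" for T
  proof -
    have T: "T \<subseteq> {..<n}" "2 * sum b T = sum b {..<n}" using that by (auto simp: A_def)
    have "T \<noteq> {}" using T tot_pos by auto
    then have "card T \<ge> 1" using T finite_subset by (metis One_nat_def Suc_leI card_gt_0_iff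
          finite_lessThan)
    moreover have "card T \<noteq> n"
    proof
      assume "card T = n"
      then have "T = {..<n}" using T card_seteq[of "{..<n}" T] by auto
      then show False using T tot_pos by simp
    qed
    moreover have "card T \<le> n" using T card_mono[of "{..<n}" T] by simp
    ultimately show ?thesis by (auto simp: K_def)
  qed
  have up: "(\<Sum>xs\<in>P. \<Sum>i<n. card {k\<in>K. set (take k (rotate i xs)) \<in> A}) \<le> (\<Sum>xs\<in>P. n - 1)"
  proof (rule sum_mono)
    fix xs assume xs: "xs \<in> P"
    then have dxs: "distinct xs" and sxs: "set xs = {..<n}" by (auto simp: P_def permutations_of_set_def)
    have "{k\<in>K. set (take k (rotate i xs)) \<in> A} =
          {k\<in>{1..<n}. 2 * sum b (set (take k (rotate i xs))) = sum b {..<n}}" for i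
    proof -
      have "set (take k (rotate i xs)) \<subseteq> {..<n}" for k
        using sxs set_take_subset[of k "rotate i xs"] by simp
      then show ?thesis unfolding A_def K_def by auto
    qed
    then show "(\<Sum>i<n. card {k\<in>K. set (take k (rotate i xs)) \<in> A}) \<le> n - 1"
      using circle_bound[OF odd dxs sxs pos] by simp
  qed
  have re: "(\<Sum>xs\<in>P. \<Sum>i<n. card {k\<in>K. set (take k (rotate i xs)) \<in> A})
          = n * (\<Sum>xs\<in>P. card {k\<in>K. set (take k xs) \<in> A})"
  proof -
    have "(\<Sum>xs\<in>P. \<Sum>i<n. card {k\<in>K. set (take k (rotate i xs)) \<in> A})
        = (\<Sum>i<n. \<Sum>xs\<in>P. card {k\<in>K. set (take k (rotate i xs)) \<in> A})"
      by (rule sum.swap)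
    also have "\<dots> = (\<Sum>i<n. \<Sum>xs\<in>P. card {k\<in>K. set (take k xs) \<in> A})"
    proof (rule sum.cong[OF refl])
      fix i
      show "(\<Sum>xs\<in>P. card {k\<in>K. set (take k (rotate i xs)) \<in> A})
          = (\<Sum>xs\<in>P. card {k\<in>K. set (take k xs) \<in> A})"
        unfolding P_def by (rule sum.reindex_bij_betw[OF rotate_bij_perm])
    qed
    finally show ?thesis by simp
  qed
  have swap: "(\<Sum>xs\<in>P. card {k\<in>K. set (take k xs) \<in> A})
            = (\<Sum>k\<in>K. card {xs\<in>P. set (take k xs) \<in> A})"
    by (rule sum_multicount_gen) (auto simp: finP K_def)
  define Ak where "Ak k = {T\<in>A. card T = k}" for k
  have fib: "card {xs\<in>P. set (take k xs) \<in> A} = card (Ak k) * (fact k * fact (n - k))"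
    if k: "k \<in> K" for k
  proof -
    define S where "S = {xs\<in>P. set (take k xs) \<in> A}"
    have finS: "finite S" using finP S_def by simp
    have img: "(\<lambda>xs. set (take k xs)) ` S \<subseteq> Ak k"
    proof
      fix T assume "T \<in> (\<lambda>xs. set (take k xs)) ` S"
      then obtain xs where xs: "xs \<in> P" "set (take k xs) \<in> A" "T = set (take k xs)"
        by (auto simp: S_def)
      have "length xs = n" using xs(1) unfolding P_def
        using length_finite_permutations_of_set by fastforce
      moreover have "distinct xs" using xs(1) by (auto simp: P_def permutations_of_set_def)
      ultimately have "card T = k" using xs(3) k by (simp add: distinct_card K_def min_absorb2)
      then show "T \<in> Ak k" using xs by (simp add: Ak_def)
    qed
    have "card S = (\<Sum>xs\<in>S. 1)" by simp
    also have "\<dots> = (\<Sum>T\<in>Ak k. \<Sum>xs\<in>{xs\<in>S. set (take k xs) = T}. 1)"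
      by (rule sum.group[symmetric]) (use finS img finA in \<open>auto simp: Ak_def\<close>)
    also have "\<dots> = (\<Sum>T\<in>Ak k. fact k * fact (n - k))"
    proof (rule sum.cong[OF refl])
      fix T assume T: "T \<in> Ak k"
      then have "{xs\<in>S. set (take k xs) = T} = {xs \<in> permutations_of_set {..<n}. set (take k xs) = T}"
        by (auto simp: S_def P_def Ak_def)
      moreover have "T \<subseteq> {..<n}" "card T = k" using T by (auto simp: Ak_def A_def)
      ultimately show "(\<Sum>xs\<in>{xs\<in>S. set (take k xs) = T}. 1) = fact k * fact (n - k)"
        using fiber_card[of "{..<n}" T k] by simp
    qed
    also have "\<dots> = card (Ak k) * (fact k * fact (n - k))" by simp
    finally show ?thesis unfolding S_def .
  qed
  have ge: "(\<Sum>k\<in>K. card {xs\<in>P. set (take k xs) \<in> A}) \<ge> (\<Sum>k\<in>K. card (Ak k) * (fact m * fact (m + 1)))"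
  proof (rule sum_mono)
    fix k assume k: "k \<in> K"
    have "fact m * fact (m + 1) \<le> (fact k * fact (n - k) :: nat)"
      using fact_min_bound[OF nm] k by (simp add: K_def)
    then show "card (Ak k) * (fact m * fact (m + 1)) \<le> card {xs\<in>P. set (take k xs) \<in> A}"
      using fib[OF k] by simp
  qed
  have cA: "(\<Sum>k\<in>K. card (Ak k)) = card A"
  proof -
    have "(\<Sum>k\<in>K. card (Ak k)) = (\<Sum>k\<in>K. \<Sum>T\<in>{T\<in>A. card T = k}. 1)"
      by (simp add: Ak_def)
    also have "\<dots> = (\<Sum>T\<in>A. 1)"
      by (rule sum.group) (use finA cardA_K in \<open>auto simp: K_def\<close>)
    finally show ?thesis by simp
  qed
  have dist: "(\<Sum>k\<in>K. card (Ak k) * (fact m * fact (m + 1)))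
      = (\<Sum>k\<in>K. card (Ak k)) * (fact m * fact (m + 1))"
    by (rule sum_distrib_right[symmetric])
  have low: "card A * (fact m * fact (m + 1)) \<le> (\<Sum>xs\<in>P. card {k\<in>K. set (take k xs) \<in> A})"
  proof -
    have "card A * (fact m * fact (m + 1)) = (\<Sum>k\<in>K. card (Ak k) * (fact m * fact (m + 1)))"
      by (simp only: dist cA)
    also have "\<dots> \<le> (\<Sum>k\<in>K. card {xs\<in>P. set (take k xs) \<in> A})" by (rule ge)
    also have "\<dots> = (\<Sum>xs\<in>P. card {k\<in>K. set (take k xs) \<in> A})" by (rule swap[symmetric])
    finally show ?thesis .
  qed
  have "n * (card A * (fact m * fact (m + 1))) \<le> n * (\<Sum>xs\<in>P. card {k\<in>K. set (take k xs) \<in> A})"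
    using low by (rule mult_le_mono2)
  also have "\<dots> \<le> (\<Sum>xs\<in>P. n - 1)" using up re by linarith
  also have "\<dots> = card P * (n - 1)" by simp
  also have "card P = fact n" unfolding P_def by simp
  also have "(fact n :: nat) = n * fact (2 * m)" using nm by simp
  also have "n * fact (2 * m) * (n - 1) = n * (fact (2 * m) * (2 * m))" using nm by (metis add_diff_cancel_right' mult.assoc)
  finally have "n * (card A * (fact m * fact (m + 1))) \<le> n * (fact (2 * m) * (2 * m))" .
  then have "card A * (fact m * fact (m + 1)) \<le> fact (2 * m) * (2 * m)"
    using nm by (subst (asm) mult_le_cancel1) simp
  then show ?thesis unfolding A_def .
qed



lemma exists_good_functional:
  fixes v :: "nat \<Rightarrow> 'a::real_inner"
  assumes "\<And>i. i < j \<Longrightarrow> v i \<noteq> 0"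
  shows "\<exists>u. \<forall>i<j. inner u (v i) \<noteq> 0"
  using assms
proof (induction j)
  case 0 then show ?case by simp
next
  case (Suc j)
  then obtain u where u: "\<forall>i<j. inner u (v i) \<noteq> 0" by auto
  have vj: "v j \<noteq> 0" using Suc.prems by simp
  show ?case
  proof (cases "inner u (v j) = 0")
    case False
    then show ?thesis using u by (metis less_Suc_eq)
  next
    case True
    define B where "B = insert 0 ((\<lambda>i. - inner u (v i) / inner (v j) (v i)) ` {..<j})"
    have "finite B" unfolding B_def by simp
    then obtain t :: real where t: "t \<notin> B" using ex_new_if_finite[OF infinite_UNIV_char_0] by blast
    define u' where "u' = u + t *\<^sub>R v j"
    have "inner u' (v i) \<noteq> 0" if i: "i < Suc j" for i
    proof (cases "i = j")
      case True
      have "inner u' (v j) = t * inner (v j) (v j)"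
        unfolding u'_def using \<open>inner u (v j) = 0\<close> by (simp add: inner_add_left)
      moreover have "t \<noteq> 0" using t B_def by auto
      ultimately show ?thesis using True vj by simp
    next
      case False
      then have ij: "i < j" using i by simp
      have e: "inner u' (v i) = inner u (v i) + t * inner (v j) (v i)"
        unfolding u'_def by (simp add: inner_add_left)
      show ?thesis
      proof (cases "inner (v j) (v i) = 0")
        case True then show ?thesis using e u ij by simp
      next
        case False
        have "t \<noteq> - inner u (v i) / inner (v j) (v i)" using t ij unfolding B_def by auto
        then show ?thesis using e False by (auto simp: field_simps)
      qed
    qed
    then show ?thesis by blast
  qed
qed

lemma signed_sum:
  fixes f :: "nat \<Rightarrow> real"
  assumes "S \<subseteq> {..<n}"
  shows "(\<Sum>i<n. if i \<in> S then f i else - f i) = 2 * sum f S - sum f {..<n}"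
proof -
  have "(\<Sum>i<n. if i \<in> S then f i else - f i) = sum f ({..<n} \<inter> S) + sum (\<lambda>i. - f i) ({..<n} - S)"
    by (simp add: sum.If_cases Diff_eq)
  also have "{..<n} \<inter> S = S" using assms by auto
  also have "sum (\<lambda>i. - f i) ({..<n} - S) = - (sum f {..<n} - sum f S)"
    using assms by (simp add: sum_negf sum_diff finite_subset)
  finally show ?thesis by simp
qed

definition sig :: "nat \<Rightarrow> nat set \<Rightarrow> nat \<Rightarrow> real" where
  "sig n T = (\<lambda>i. if i < n then (if i \<in> T then 1 else -1) else 0)"

lemma rademacher_vec_eq:
  "rademacher_vec n = pmf_of_set (PiE_dflt {..<n} 0 (\<lambda>_. {-1, 1}))"
  unfolding rademacher_vec_def rademacher_def by (rule Pi_pmf_of_set) auto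

lemma sig_bij: "bij_betw (sig n) (Pow {..<n}) (PiE_dflt {..<n} 0 (\<lambda>_. {-1, 1}))"
proof (rule bij_betwI')
  fix T T' assume "T \<in> Pow {..<n}" "T' \<in> Pow {..<n}"
  then show "(sig n T = sig n T') = (T = T')"
    unfolding sig_def by (auto simp: fun_eq_iff)
next
  fix T assume "T \<in> Pow {..<n}"
  then show "sig n T \<in> PiE_dflt {..<n} 0 (\<lambda>_. {-1, 1})"
    by (auto simp: sig_def PiE_dflt_def)
next
  fix e assume e: "e \<in> PiE_dflt {..<n} 0 (\<lambda>_. {-1, 1::real})"
  have "e = sig n {i. i < n \<and> e i = 1}"
    using e by (auto simp: sig_def PiE_dflt_def fun_eq_iff)
  then show "\<exists>T\<in>Pow {..<n}. e = sig n T" by blast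
qed

lemma prob_count:
  "measure_pmf.prob (rademacher_vec n) X = card {T \<in> Pow {..<n}. sig n T \<in> X} / 2 ^ n"
proof -
  let ?E = "PiE_dflt {..<n} 0 (\<lambda>_. {-1, 1::real})"
  have cE: "card ?E = 2 ^ n"
    using bij_betw_same_card[OF sig_bij[of n]] by (simp add: card_Pow)
  have "?E \<inter> X = sig n ` {T \<in> Pow {..<n}. sig n T \<in> X}"
    using sig_bij[of n] unfolding bij_betw_def by auto
  moreover have "inj_on (sig n) {T \<in> Pow {..<n}. sig n T \<in> X}"
    using sig_bij[of n] unfolding bij_betw_def by (auto intro: inj_on_subset)
  ultimately have "card (?E \<inter> X) = card {T \<in> Pow {..<n}. sig n T \<in> X}"
    by (simp add: card_image)
  moreover have "?E \<noteq> {}" "finite ?E" using cE card_gt_0_iff[of ?E] by auto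
  ultimately show ?thesis unfolding rademacher_vec_eq
    by (subst measure_pmf_of_set) (auto simp: cE)
qed



lemma lhs_count:
  fixes v :: "nat \<Rightarrow> 'a::real_inner"
  assumes nm: "n = 2 * m + 1" and nz: "\<And>i. i < n \<Longrightarrow> v i \<noteq> 0"
  shows "card {T \<in> Pow {..<n}. sig n T \<in> {e. (\<Sum>i<n. e i *\<^sub>R v i) = 0}} * (fact m * fact (m + 1))
         \<le> fact (2 * m) * (2 * m)"
proof -
  obtain u where u: "\<forall>i<n. inner u (v i) \<noteq> 0" using exists_good_functional[of n v] nz by blast
  define a where "a i = inner u (v i)" for i
  define b where "b i = \<bar>a i\<bar>" for i
  define N where "N = {i. i < n \<and> a i < 0}"
  define fl where "fl T = (T - N) \<union> (N - T)" for T :: "nat set"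
  define A where "A = {T. T \<subseteq> {..<n} \<and> 2 * sum b T = sum b {..<n}}"
  define L where "L = {T \<in> Pow {..<n}. sig n T \<in> {e. (\<Sum>i<n. e i *\<^sub>R v i) = 0}}"
  have bpos: "b i > 0" if "i < n" for i using u that unfolding b_def a_def by auto
  have inj: "inj_on fl L" unfolding fl_def by (rule inj_onI) blast
  have img: "fl ` L \<subseteq> A"
  proof
    fix S assume "S \<in> fl ` L"
    then obtain T where T: "T \<subseteq> {..<n}" "(\<Sum>i<n. sig n T i *\<^sub>R v i) = 0" and S: "S = fl T"
      by (auto simp: L_def)
    have "inner u (\<Sum>i<n. sig n T i *\<^sub>R v i) = 0" using T by simp
    then have "(\<Sum>i<n. sig n T i * a i) = 0" by (simp add: inner_sum_right a_def)
    moreover have "sig n T i * a i = (if i \<in> S then b i else - b i)" if "i < n" for i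
      using that unfolding S fl_def sig_def b_def N_def by auto
    ultimately have "(\<Sum>i<n. if i \<in> S then b i else - b i) = 0" by simp
    moreover have "S \<subseteq> {..<n}" using T unfolding S fl_def N_def by auto
    ultimately show "S \<in> A" unfolding A_def using signed_sum[of S n b] by simp
  qed
  have "card L \<le> card A"
    by (rule card_inj_on_le[OF inj img]) (auto simp: A_def intro: finite_subset[of _ "Pow {..<n}"])
  moreover have "card A * (fact m * fact (m + 1)) \<le> fact (2 * m) * (2 * m)"
    unfolding A_def by (rule count_A[OF nm bpos])
  ultimately show ?thesis unfolding L_def by (meson le_trans mult_le_mono1)
qed

lemma rhs_count:
  assumes nm: "n = 2 * m + 1" and m: "m \<ge> 1"
  shows "((2 * m) choose (m + 1)) + ((2 * m) choose (m - 1))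
     \<le> card {T \<in> Pow {..<n}. sig n T \<in> {e. (1/2) * (\<Sum>i<n - 1. e i) + e (n - 1) = 0}}"
proof -
  define R where "R = {T \<in> Pow {..<n}. sig n T \<in> {e. (1/2) * (\<Sum>i<n - 1. e i) + e (n - 1) = (0::real)}}"
  define R1 where "R1 = {T. T \<subseteq> {..<2*m} \<and> card T = m + 1}"
  define R0 where "R0 = {T. T \<subseteq> {..<2*m} \<and> card T = m - 1}"
  define R2 where "R2 = insert (2*m) ` R0"
  have sumsig: "(\<Sum>i<2*m. sig n T i) = 2 * card (T \<inter> {..<2*m}) - real (2 * m)" for T
  proof -
    have "(\<Sum>i<2*m. sig n T i) = (\<Sum>i<2*m. if i \<in> T \<inter> {..<2*m} then 1 else - 1)"
      by (rule sum.cong) (auto simp: sig_def nm)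
    also have "\<dots> = 2 * sum (\<lambda>_. 1::real) (T \<inter> {..<2*m}) - sum (\<lambda>_. 1) {..<2*m}"
      by (rule signed_sum) auto
    finally show ?thesis by simp
  qed
  have n1: "n - 1 = 2 * m" using nm by simp
  have "R1 \<subseteq> R"
  proof
    fix T assume T: "T \<in> R1"
    then have "T \<inter> {..<2*m} = T" "2*m \<notin> T" by (auto simp: R1_def)
    moreover have "card T = m + 1" using T by (simp add: R1_def)
    ultimately have s: "(\<Sum>i<2*m. sig n T i) = 2" using sumsig[of T] by simp
    have "sig n T (2*m) = -1" using \<open>2*m \<notin> T\<close> by (simp add: sig_def nm)
    moreover have "T \<in> Pow {..<n}" using T by (auto simp: R1_def nm)
    ultimately show "T \<in> R" unfolding R_def n1 using s by simp
  qed
  moreover have "R2 \<subseteq> R"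
  proof
    fix T assume "T \<in> R2"
    then obtain T0 where T0: "T0 \<in> R0" "T = insert (2*m) T0" by (auto simp: R2_def)
    then have "T \<inter> {..<2*m} = T0" "2*m \<in> T" by (auto simp: R0_def)
    moreover have "card T0 = m - 1" using T0 by (simp add: R0_def)
    ultimately have s: "(\<Sum>i<2*m. sig n T i) = -2" using sumsig[of T] m by (simp add: of_nat_diff)
    have "sig n T (2*m) = 1" using \<open>2*m \<in> T\<close> by (simp add: sig_def nm)
    moreover have "T \<in> Pow {..<n}" using T0 by (auto simp: R0_def nm)
    ultimately show "T \<in> R" unfolding R_def n1 using s by simp
  qed
  ultimately have sub: "R1 \<union> R2 \<subseteq> R" by simp
  have dis: "R1 \<inter> R2 = {}" unfolding R1_def R2_def by auto
  have c1: "card R1 = (2*m) choose (m + 1)" unfolding R1_def using n_subsets[of "{..<2*m}"] by simp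
  have "inj_on (insert (2*m)) R0" unfolding R0_def by (rule inj_onI) (metis Diff_insert_absorb lessThan_iff less_irrefl mem_Collect_eq subsetD)
  then have c2: "card R2 = (2*m) choose (m - 1)"
    unfolding R2_def using n_subsets[of "{..<2*m}"] by (simp add: card_image R0_def)
  have fin: "finite R" unfolding R_def by simp
  have "card (R1 \<union> R2) \<le> card R" by (rule card_mono[OF fin sub])
  moreover have "card (R1 \<union> R2) = card R1 + card R2"
    by (rule card_Un_disjoint) (use dis in \<open>auto simp: R1_def R2_def R0_def\<close>)
  ultimately show ?thesis using c1 c2 unfolding R_def by simp
qed



lemma binom_identity:
  assumes "m \<ge> 1"
  shows "(((2 * m) choose (m + 1)) + ((2 * m) choose (m - 1))) * (fact m * fact (m + 1))
          = fact (2 * m) * (2 * m :: nat)"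
proof -
  have sym: "(2 * m) choose (m - 1) = (2 * m) choose (m + 1)"
    using binomial_symmetric[of "m - 1" "2 * m"] assms by (simp add: numeral_2_eq_2)
  have mm: "2 * m - (m + 1) = m - 1" by simp
  have fl: "fact (m + 1) * fact (2 * m - (m + 1)) * ((2 * m) choose (m + 1)) = (fact (2 * m) :: nat)"
    using assms by (intro binomial_fact_lemma) simp
  have fm: "fact m = m * (fact (m - 1) :: nat)" using assms
    by (metis Suc_diff_1 fact_Suc less_eq_Suc_le One_nat_def of_nat_id)
  define F where "F = (fact (m - 1) :: nat)"
  define f1 where "f1 = (fact (m + 1) :: nat)"
  define C where "C = (2 * m) choose (m + 1)"
  have fl': "f1 * F * C = fact (2 * m)" using fl unfolding F_def f1_def C_def
    by (simp add: mm del: fact_Suc)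
  have "(C + C) * (m * F * f1) = 2 * m * (f1 * F * C)" by (simp add: algebra_simps)
  then show ?thesis unfolding sym fm fl'[symmetric] F_def[symmetric] f1_def[symmetric] C_def[symmetric]
    by (simp add: algebra_simps)
qed

theorem theorem4:
  fixes n :: nat and v :: "nat \<Rightarrow> real ^ 'd"
  assumes "odd n"
    and "\<And>i. i < n \<Longrightarrow> v i \<noteq> 0"
    and "\<And>i. i < n \<Longrightarrow> norm (v i) \<le> 1"
  shows "measure_pmf.prob (rademacher_vec n) {e. (\<Sum>i<n. e i *\<^sub>R v i) = 0}
       \<le> measure_pmf.prob (rademacher_vec n)
            {e. (1/2) * (\<Sum>i<n - 1. e i) + e (n - 1) = 0}"
proof -
  obtain m where nm: "n = 2 * m + 1" using assms(1) oddE by blast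
  define L where "L = card {T \<in> Pow {..<n}. sig n T \<in> {e. (\<Sum>i<n. e i *\<^sub>R v i) = 0}}"
  define R where "R = card {T \<in> Pow {..<n}. sig n T \<in> {e. (1/2) * (\<Sum>i<n - 1. e i) + e (n - 1) = (0::real)}}"
  have lc: "L * (fact m * fact (m + 1)) \<le> fact (2 * m) * (2 * m)"
    unfolding L_def by (rule lhs_count[OF nm assms(2)])
  have "L \<le> R"
  proof (cases "m = 0")
    case True
    then show ?thesis using lc by simp
  next
    case False
    then have m1: "m \<ge> 1" by simp
    have "L * (fact m * fact (m + 1)) \<le> fact (2 * m) * (2 * m)" by (rule lc)
    also have "\<dots> = (((2 * m) choose (m + 1)) + ((2 * m) choose (m - 1))) * (fact m * fact (m + 1))"
      by (rule binom_identity[OF m1, symmetric])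
    also have "\<dots> \<le> R * (fact m * fact (m + 1))"
      unfolding R_def by (rule mult_le_mono1[OF rhs_count[OF nm m1]])
    finally have "L * (fact m * fact (m + 1)) \<le> R * (fact m * fact (m + 1))" .
    then show ?thesis by simp
  qed
  then have "real L / 2 ^ n \<le> real R / 2 ^ n" by (intro divide_right_mono) auto
  then show ?thesis unfolding prob_count L_def R_def .
qed

end
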